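(* Let $(M^4,\widetilde g)$ be the Walker $4$-manifold of the context, let $f$ be a smooth function on $M^4$ depending only on $(u,v)$, let $Y$ be a smooth vector field with $\operatorname{div}(Y)=0$, and let $X=\nabla f+Y$. If $(M^4,\widetilde g,X,\lambda,\beta_1,\beta_2)$ is a Ricci–Yamabe soliton, then it is steady, i.e. $\lambda=0$.
   Context: $M^4$ is a smooth $4$-manifold with coordinates $(x,y,u,v)$ and metric \[ \widetilde g=\begin{pmatrix}0&0&1&0\\0&0&0&1\\1&0&F&0\\0&1&0&F\end{pmatrix},\qquad F(x,y,u,v)=x\,a(u,v)+y\,b(u,v)+c(u,v), \] with $a,b,c$ smooth real functions of $(u,v)$ only. For $\widetilde g$, $R=0$ and the only nonzero Ricci components are $R_{33}=\tfrac12 b^2-b_v$, $R_{34}=R_{43}=\tfrac12(-ab+a_v+b_u)$, $R_{44}=\tfrac12 a^2-a_u$. $\nabla f$ is the gradient and $\mathcal{L}_X$ the Lie derivative. A Ricci–Yamabe soliton $(M^4,\widetilde g,X,\lambda,\beta_1,\beta_2)$ consists of a smooth vector field $X$ and real constants $\lambda,\beta_1,\beta_2$ with $2\beta_1\mathrm{Ric}+\mathcal{L}_X\widetilde g=(-2\lambda+\beta_2R)\widetilde g$; it is steady if $\lambda=0$. *)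

theory Defs
  imports "HOL-Analysis.Analysis"
begin

text \<open>Points of M^4 = R^4 are vectors p :: real^4 with coordinates
  x = p$1, y = p$2, u = p$3, v = p$4.\<close>

definition pd :: "4 \<Rightarrow> (real^4 \<Rightarrow> real) \<Rightarrow> real^4 \<Rightarrow> real" where
  "pd k h p = deriv (\<lambda>t. h (p + t *\<^sub>R axis k 1)) 0"

fun pd_iter :: "4 list \<Rightarrow> (real^4 \<Rightarrow> real) \<Rightarrow> real^4 \<Rightarrow> real" where
  "pd_iter [] h = h"
| "pd_iter (k # ks) h = pd k (pd_iter ks h)"

definition smooth4 :: "(real^4 \<Rightarrow> real) \<Rightarrow> bool" where
  "smooth4 h \<longleftrightarrow> (\<forall>ks. pd_iter ks h differentiable_on UNIV)"

definition smooth_vf :: "(real^4 \<Rightarrow> real^4) \<Rightarrow> bool" where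
  "smooth_vf X \<longleftrightarrow> (\<forall>i. smooth4 (\<lambda>p. X p $ i))"

definition WF :: "(real \<Rightarrow> real \<Rightarrow> real) \<Rightarrow> (real \<Rightarrow> real \<Rightarrow> real) \<Rightarrow> (real \<Rightarrow> real \<Rightarrow> real)
                  \<Rightarrow> real^4 \<Rightarrow> real" where
  "WF a b c p = p$1 * a (p$3) (p$4) + p$2 * b (p$3) (p$4) + c (p$3) (p$4)"

definition gW :: "(real \<Rightarrow> real \<Rightarrow> real) \<Rightarrow> (real \<Rightarrow> real \<Rightarrow> real) \<Rightarrow> (real \<Rightarrow> real \<Rightarrow> real)
                  \<Rightarrow> real^4 \<Rightarrow> real^4^4" where
  "gW a b c p = (\<chi> i j.
     if (i = 1 \<and> j = 3) \<or> (i = 3 \<and> j = 1) \<or> (i = 2 \<and> j = 4) \<or> (i = 4 \<and> j = 2) then 1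
     else if (i = 3 \<and> j = 3) \<or> (i = 4 \<and> j = 4) then WF a b c p
     else 0)"

definition du :: "(real \<Rightarrow> real \<Rightarrow> real) \<Rightarrow> real \<Rightarrow> real \<Rightarrow> real" where
  "du h u v = deriv (\<lambda>t. h t v) u"
definition dv :: "(real \<Rightarrow> real \<Rightarrow> real) \<Rightarrow> real \<Rightarrow> real \<Rightarrow> real" where
  "dv h u v = deriv (\<lambda>t. h u t) v"

definition RicW :: "(real \<Rightarrow> real \<Rightarrow> real) \<Rightarrow> (real \<Rightarrow> real \<Rightarrow> real) \<Rightarrow> real^4 \<Rightarrow> real^4^4" where
  "RicW a b p = (let u = p$3; v = p$4 in (\<chi> i j.
     if i = 3 \<and> j = 3 then (b u v)^2 / 2 - dv b u v
     else if (i = 3 \<and> j = 4) \<or> (i = 4 \<and> j = 3) then (- a u v * b u v + dv a u v + du b u v) / 2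
     else if i = 4 \<and> j = 4 then (a u v)^2 / 2 - du a u v
     else 0))"

definition scalW :: "(real \<Rightarrow> real \<Rightarrow> real) \<Rightarrow> (real \<Rightarrow> real \<Rightarrow> real) \<Rightarrow> (real \<Rightarrow> real \<Rightarrow> real)
                     \<Rightarrow> real^4 \<Rightarrow> real" where
  "scalW a b c p = (\<Sum>i\<in>UNIV. \<Sum>j\<in>UNIV. matrix_inv (gW a b c p) $ i $ j * RicW a b p $ i $ j)"

definition lie_g :: "(real^4 \<Rightarrow> real^4^4) \<Rightarrow> (real^4 \<Rightarrow> real^4) \<Rightarrow> real^4 \<Rightarrow> real^4^4" where
  "lie_g g X p = (\<chi> i j. (\<Sum>k\<in>UNIV.
       X p $ k * pd k (\<lambda>q. g q $ i $ j) p
     + g p $ k $ j * pd i (\<lambda>q. X q $ k) p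
     + g p $ i $ k * pd j (\<lambda>q. X q $ k) p))"

definition grad_g :: "(real^4 \<Rightarrow> real^4^4) \<Rightarrow> (real^4 \<Rightarrow> real) \<Rightarrow> real^4 \<Rightarrow> real^4" where
  "grad_g g f p = matrix_inv (g p) *v (\<chi> j. pd j f p)"

definition div_g :: "(real^4 \<Rightarrow> real^4^4) \<Rightarrow> (real^4 \<Rightarrow> real^4) \<Rightarrow> real^4 \<Rightarrow> real" where
  "div_g g Y p = (\<Sum>i\<in>UNIV. pd i (\<lambda>q. sqrt \<bar>det (g q)\<bar> * Y q $ i) p) / sqrt \<bar>det (g p)\<bar>"

definition ricci_yamabe_soliton ::
  "(real^4 \<Rightarrow> real^4^4) \<Rightarrow> (real^4 \<Rightarrow> real^4^4) \<Rightarrow> (real^4 \<Rightarrow> real)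
   \<Rightarrow> (real^4 \<Rightarrow> real^4) \<Rightarrow> real \<Rightarrow> real \<Rightarrow> real \<Rightarrow> bool" where
  "ricci_yamabe_soliton g Ric R X lam \<beta>1 \<beta>2 \<longleftrightarrow>
     smooth_vf X \<and>
     (\<forall>p. (2 * \<beta>1) *\<^sub>R Ric p + lie_g g X p = (-2 * lam + \<beta>2 * R p) *\<^sub>R g p)"

end

theory Submission
  imports Defs
begin

lemma line_fd:
  fixes h :: "real^4 \<Rightarrow> real"
  assumes "h differentiable at p"
  shows "(\<lambda>t. h (p + t *\<^sub>R v)) field_differentiable at 0"
proof -
  have "(\<lambda>t. p + t *\<^sub>R v) differentiable at (0::real)"
    by (intro derivative_intros)
  moreover have "h differentiable at ((\<lambda>t. p + t *\<^sub>R v) 0)" using assms by simp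
  ultimately have "(h \<circ> (\<lambda>t. p + t *\<^sub>R v)) differentiable at 0"
    by (rule differentiable_chain_at)
  hence "(\<lambda>t. h (p + t *\<^sub>R v)) differentiable at 0" by (simp add: o_def)
  thus ?thesis
    using DERIV_deriv_iff_real_differentiable DERIV_deriv_iff_field_differentiable by blast
qed

lemma axis_comp: "axis k (1::real) $ i = (if i = k then 1 else 0)"
  by (simp add: axis_def)

lemma t1: "(1::4) \<noteq> 3 \<and> (2::4) \<noteq> 4 \<and> (1::4) \<noteq> 2 \<and> (3::4) \<noteq> 4 \<and> (1::4) \<noteq> 4 \<and> (2::4) \<noteq> 3" by simp

definition Gi :: "(real \<Rightarrow> real \<Rightarrow> real) \<Rightarrow> (real \<Rightarrow> real \<Rightarrow> real) \<Rightarrow> (real \<Rightarrow> real \<Rightarrow> real)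
                  \<Rightarrow> real^4 \<Rightarrow> real^4^4" where
  "Gi a b c p = (\<chi> i j.
     if (i = 1 \<and> j = 3) \<or> (i = 3 \<and> j = 1) \<or> (i = 2 \<and> j = 4) \<or> (i = 4 \<and> j = 2) then 1
     else if (i = 1 \<and> j = 1) \<or> (i = 2 \<and> j = 2) then - WF a b c p
     else 0)"

lemma gGi: "gW a b c p ** Gi a b c p = mat 1" "Gi a b c p ** gW a b c p = mat 1"
  by (simp_all add: vec_eq_iff forall_4 matrix_matrix_mult_def sum_4 gW_def Gi_def mat_def)

lemma minv: "matrix_inv (gW a b c p) = Gi a b c p"
proof -
  let ?A = "gW a b c p"
  have ex: "\<exists>B. ?A ** B = mat 1 \<and> B ** ?A = mat 1" using gGi by blast
  have P: "?A ** matrix_inv ?A = mat 1 \<and> matrix_inv ?A ** ?A = mat 1"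
    unfolding matrix_inv_def by (rule someI_ex[OF ex])
  have "Gi a b c p = (matrix_inv ?A ** ?A) ** Gi a b c p" using P by simp
  also have "\<dots> = matrix_inv ?A ** (?A ** Gi a b c p)" by (simp add: matrix_mul_assoc)
  also have "\<dots> = matrix_inv ?A" using gGi by simp
  finally show ?thesis by simp
qed

lemma scal0: "scalW a b c p = 0"
  by (simp add: scalW_def minv sum_4 Gi_def RicW_def Let_def)

definition G0 :: "real^4^4" where
  "G0 = (\<chi> i j. if (i = 1 \<and> j = 3) \<or> (i = 3 \<and> j = 1) \<or> (i = 2 \<and> j = 4) \<or> (i = 4 \<and> j = 2) then 1 else 0)"

lemma detconst: "det (gW a b c p) = det G0"
proof -
  let ?F = "WF a b c p"
  define B where "B = (\<chi> k. if k = 4 then row 4 G0 + ?F *s row 2 G0 else row k G0)"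
  have "gW a b c p = (\<chi> k. if k = 3 then row 3 B + ?F *s row 1 B else row k B)"
    by (simp add: vec_eq_iff forall_4 B_def row_def gW_def G0_def)
  hence "det (gW a b c p) = det B" by (simp add: det_row_operation)
  also have "\<dots> = det G0" unfolding B_def by (rule det_row_operation) simp
  finally show ?thesis .
qed

lemma detG0: "det G0 \<noteq> 0"
proof -
  have "G0 ** G0 = mat 1"
    by (simp add: vec_eq_iff forall_4 matrix_matrix_mult_def sum_4 G0_def mat_def)
  hence "det G0 * det G0 = 1" by (metis det_mul det_I)
  thus ?thesis by auto
qed

lemma pd_cmult:
  assumes "h differentiable at p"
  shows "pd k (\<lambda>q. s * h q) p = s * pd k h p"
  unfolding pd_def using line_fd[OF assms] by (simp add: deriv_cmult)

lemma pd_addconst: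
  assumes "h differentiable at p" "\<And>t. G (p + t *\<^sub>R axis k 1) = G p"
  shows "pd k (\<lambda>q. G q + h q) p = pd k h p"
  unfolding pd_def using line_fd[OF assms(1)] assms(2) by simp

lemma pd_const:
  assumes "\<And>t. G (p + t *\<^sub>R axis k 1) = G p"
  shows "pd k G p = 0"
  unfolding pd_def using assms by simp

theorem mainTheorem6:
  fixes a b c f :: "real \<Rightarrow> real \<Rightarrow> real"
    and Y :: "real^4 \<Rightarrow> real^4"
    and lam \<beta>1 \<beta>2 :: real
  assumes "smooth4 (\<lambda>p. a (p$3) (p$4))"
    and "smooth4 (\<lambda>p. b (p$3) (p$4))"
    and "smooth4 (\<lambda>p. c (p$3) (p$4))"
    and "smooth4 (\<lambda>p. f (p$3) (p$4))"
    and "smooth_vf Y"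
    and "\<forall>p. div_g (gW a b c) Y p = 0"
    and "ricci_yamabe_soliton (gW a b c) (RicW a b) (scalW a b c)
           (\<lambda>p. grad_g (gW a b c) (\<lambda>q. f (q$3) (q$4)) p + Y p) lam \<beta>1 \<beta>2"
  shows "lam = 0"
proof -
  define p :: "real^4" where "p = 0"
  define F where "F = (\<lambda>q::real^4. f (q$3) (q$4))"
  define X where "X = (\<lambda>q. grad_g (gW a b c) F q + Y q)"
  have Yd: "\<And>i q. (\<lambda>q. Y q $ i) differentiable at q"
  proof -
    fix i q
    have "smooth4 (\<lambda>q. Y q $ i)" using assms(5) by (simp add: smooth_vf_def)
    hence "(\<lambda>q. Y q $ i) differentiable_on UNIV" unfolding smooth4_def
      by (metis pd_iter.simps(1))
    thus "(\<lambda>q. Y q $ i) differentiable at q" by (simp add: differentiable_on_def)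
  qed
  have E: "(2 * \<beta>1) *\<^sub>R RicW a b p + lie_g (gW a b c) X p = (-2 * lam + \<beta>2 * scalW a b c p) *\<^sub>R gW a b c p"
    using assms(7) unfolding ricci_yamabe_soliton_def X_def F_def by blast
  let ?D = "\<lambda>k i. pd k (\<lambda>q. X q $ i) p"
  have c0: "\<And>k i j. (i = 1 \<or> i = 2) \<Longrightarrow> (j = 1 \<or> j = 2 \<or> j = 3 \<or> j = 4) \<Longrightarrow> pd k (\<lambda>q. gW a b c q $ i $ j) p = 0"
    by (rule pd_const) (auto simp: gW_def)
  have e11: "2 * ?D 1 3 = 0"
    using arg_cong[OF E, of "\<lambda>M. M $ 1 $ 1"]
    by (simp add: lie_g_def sum_4 c0 RicW_def Let_def) (simp add: gW_def)
  have e22: "2 * ?D 2 4 = 0"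
    using arg_cong[OF E, of "\<lambda>M. M $ 2 $ 2"]
    by (simp add: lie_g_def sum_4 c0 RicW_def Let_def) (simp add: gW_def)
  have e13: "?D 1 1 + WF a b c p * ?D 1 3 + ?D 3 3 = -2 * lam"
    using arg_cong[OF E, of "\<lambda>M. M $ 1 $ 3"]
    by (simp add: lie_g_def sum_4 c0 RicW_def Let_def scal0) (simp add: gW_def algebra_simps)
  have e24: "?D 2 2 + WF a b c p * ?D 2 4 + ?D 4 4 = -2 * lam"
    using arg_cong[OF E, of "\<lambda>M. M $ 2 $ 4"]
    by (simp add: lie_g_def sum_4 c0 RicW_def Let_def scal0) (simp add: gW_def algebra_simps)
  have pF12: "\<And>q. pd 1 F q = 0" "\<And>q. pd 2 F q = 0"
    by (rule pd_const; simp add: F_def axis_def)+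
  have grad: "\<And>q. grad_g (gW a b c) F q = (\<chi> i. if i = 1 then pd 3 F q else if i = 2 then pd 4 F q else 0)"
    by (simp add: grad_g_def minv vec_eq_iff forall_4 matrix_vector_mult_def sum_4 Gi_def pF12)
  have X1: "X = (\<lambda>q. (\<chi> i. if i = 1 then pd 3 F q + Y q $ 1 else if i = 2 then pd 4 F q + Y q $ 2 else Y q $ i))"
    by (rule ext) (simp add: X_def grad vec_eq_iff forall_4)
  have D11: "?D 1 1 = pd 1 (\<lambda>q. Y q $ 1) p"
    unfolding X1 by simp (rule pd_addconst[OF Yd], simp add: pd_def F_def axis_def)
  have D22: "?D 2 2 = pd 2 (\<lambda>q. Y q $ 2) p"
    unfolding X1 by simp (rule pd_addconst[OF Yd], simp add: pd_def F_def axis_def)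
  have D33: "?D 3 3 = pd 3 (\<lambda>q. Y q $ 3) p" unfolding X1 by simp
  have D44: "?D 4 4 = pd 4 (\<lambda>q. Y q $ 4) p" unfolding X1 by simp
  define s where "s = sqrt \<bar>det G0\<bar>"
  have s0: "s \<noteq> 0" using detG0 by (simp add: s_def)
  have "div_g (gW a b c) Y p = (\<Sum>i\<in>UNIV. s * pd i (\<lambda>q. Y q $ i) p) / s"
    unfolding div_g_def detconst s_def[symmetric] by (simp add: pd_cmult[OF Yd])
  hence "(\<Sum>i\<in>UNIV. s * pd i (\<lambda>q. Y q $ i) p) = 0" using assms(6) s0 by simp
  hence "s * (\<Sum>i\<in>UNIV. pd i (\<lambda>q. Y q $ i) p) = 0" by (simp add: sum_distrib_left)
  hence dv: "(\<Sum>i\<in>UNIV. pd i (\<lambda>q. Y q $ i) p) = 0" using s0 by simp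
  show ?thesis using dv e11 e22 e13 e24 D11 D22 D33 D44 by (simp add: sum_4)
qed

end
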